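(* Fix a finite set $T$ of tuples $(q_1,\dots,q_m,r;p_1,\dots,p_k,t)$ of variables. The following three extensions of $\mathbf{L}^*(/)$ (each including the cut rule) derive exactly the same sequents: (1) $\mathbf{L}^*(/)$ extended with the B-rules for all tuples in $T$; (2) $\mathbf{L}^*(/)$ extended with the $\mathrm{B}'$-rules for all tuples in $T$; (3) $\mathbf{L}^*(/)$ extended with the B-axioms for all tuples in $T$.
   Context: $\mathbf{L}^*(/)$ is the one-division Lambek calculus: formulae are built from variables using only $/$; sequents are $\Pi\to A$ with $\Pi$ a finite (possibly empty, $\Lambda$) sequence of formulae; axioms $A\to A$; rules ($/L$) from $\Pi\to A$ and $\Delta_1,B,\Delta_2\to C$ infer $\Delta_1,B/A,\Pi,\Delta_2\to C$; ($/R$) from $\Pi,A\to B$ infer $\Pi\to B/A$; (cut) from $\Pi\to A$ and $\Delta_1,A,\Delta_2\to C$ infer $\Delta_1,\Pi,\Delta_2\to C$. For a tuple $(q_1,\dots,q_m,r;p_1,\dots,p_k,t)$ of concrete variables: the B-rule is: from $\Delta,q_1,\dots,q_m\to r$ infer $p_1,\dots,p_k,\Delta\to t$ (for arbitrary sequences $\Delta$ of formulae); the $\mathrm{B}'$-rule is: from $\Pi_1\to p_1$, ..., $\Pi_k\to p_k$ and $\Delta,q_1,\dots,q_m\to r$ infer $\Pi_1,\dots,\Pi_k,\Delta\to t$; the B-axiom is $\Lambda\to (t/(r/q_1\ldots q_m))/p_1\ldots p_k$, where $E/F_1\ldots F_n$ abbreviates $(\ldots((E/F_n)/F_{n-1})\ldots)/F_1$.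 *)

theory Defs
  imports Main
begin

datatype 'a fm = V 'a | Div "'a fm" "'a fm"

text \<open>E / F1 ... Fn abbreviates (...((E/Fn)/F(n-1))...)/F1.\<close>
fun divs :: "'a fm \<Rightarrow> 'a fm list \<Rightarrow> 'a fm" where
  "divs E [] = E"
| "divs E (F # Fs) = Div (divs E Fs) F"

text \<open>A tuple (q1..qm, r; p1..pk, t) of variables, stored as (qs, r, ps, t).\<close>
type_synonym 'a tup = "'a list \<times> 'a \<times> 'a list \<times> 'a"

datatype ext = ExtB | ExtB' | ExtAx

definition b_axiom :: "'a tup \<Rightarrow> 'a fm" where
  "b_axiom tp = (case tp of (qs, r, ps, t) \<Rightarrow>
     divs (Div (V t) (divs (V r) (map V qs))) (map V ps))"

inductive deriv :: "ext \<Rightarrow> 'a tup set \<Rightarrow> 'a fm list \<Rightarrow> 'a fm \<Rightarrow> bool"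
  for e :: ext and T :: "'a tup set" where
  ax: "deriv e T [A] A"
| divL: "deriv e T \<Pi> A \<Longrightarrow> deriv e T (\<Delta>1 @ [B] @ \<Delta>2) C
         \<Longrightarrow> deriv e T (\<Delta>1 @ [Div B A] @ \<Pi> @ \<Delta>2) C"
| divR: "deriv e T (\<Pi> @ [A]) B \<Longrightarrow> deriv e T \<Pi> (Div B A)"
| cut: "deriv e T \<Pi> A \<Longrightarrow> deriv e T (\<Delta>1 @ [A] @ \<Delta>2) C
         \<Longrightarrow> deriv e T (\<Delta>1 @ \<Pi> @ \<Delta>2) C"
| brule: "e = ExtB \<Longrightarrow> (qs, r, ps, t) \<in> T
         \<Longrightarrow> deriv e T (\<Delta> @ map V qs) (V r)
         \<Longrightarrow> deriv e T (map V ps @ \<Delta>) (V t)"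
| brule': "e = ExtB' \<Longrightarrow> (qs, r, ps, t) \<in> T
         \<Longrightarrow> length \<Pi>s = length ps
         \<Longrightarrow> (\<forall>i < length ps. deriv e T (\<Pi>s ! i) (V (ps ! i)))
         \<Longrightarrow> deriv e T (\<Delta> @ map V qs) (V r)
         \<Longrightarrow> deriv e T (concat \<Pi>s @ \<Delta>) (V t)"
| baxiom: "e = ExtAx \<Longrightarrow> tp \<in> T \<Longrightarrow> deriv e T [] (b_axiom tp)"

end

theory Submission
  imports Defs
begin

lemma inv_div:
  assumes "deriv e T \<Pi> (Div B A)" shows "deriv e T (\<Pi> @ [A]) B"
proof -
  have "deriv e T ([] @ [Div B A] @ [A] @ []) B"
    using divL[of e T "[A]" A "[]" B "[]" B] ax[of e T A] ax[of e T B] by simp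
  from cut[OF assms this] show ?thesis by simp
qed

lemma divs_R: "deriv e T (\<Pi> @ Fs) E \<Longrightarrow> deriv e T \<Pi> (divs E Fs)"
proof (induction Fs arbitrary: \<Pi>)
  case Nil then show ?case by simp
next
  case (Cons F Fs)
  then have "deriv e T (\<Pi> @ [F]) (divs E Fs)" by simp
  then show ?case by (simp add: divR)
qed

lemma divs_inv: "deriv e T \<Pi> (divs E Fs) \<Longrightarrow> deriv e T (\<Pi> @ Fs) E"
proof (induction Fs arbitrary: \<Pi>)
  case Nil then show ?case by simp
next
  case (Cons F Fs)
  then have "deriv e T (\<Pi> @ [F]) (divs E Fs)" using inv_div by simp
  from Cons.IH[OF this] show ?case by simp
qed

lemma multicut:
  "deriv e T (\<Gamma> @ map V ps @ \<Delta>) C \<Longrightarrow> length \<Pi>s = length ps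
   \<Longrightarrow> (\<forall>i < length ps. deriv e T (\<Pi>s ! i) (V (ps ! i)))
   \<Longrightarrow> deriv e T (\<Gamma> @ concat \<Pi>s @ \<Delta>) C"
proof (induction ps arbitrary: \<Gamma> \<Pi>s)
  case Nil then show ?case by simp
next
  case (Cons p ps)
  then obtain \<Pi> \<Pi>s' where P: "\<Pi>s = \<Pi> # \<Pi>s'" by (cases \<Pi>s) auto
  have h0: "deriv e T \<Pi> (V p)" using Cons.prems(3) P by force
  have "deriv e T (\<Gamma> @ [V p] @ (map V ps @ \<Delta>)) C" using Cons.prems(1) by simp
  from cut[OF h0 this] have "deriv e T ((\<Gamma> @ \<Pi>) @ map V ps @ \<Delta>) C" by simp
  moreover have "length \<Pi>s' = length ps" using Cons.prems(2) P by simp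
  moreover have "\<forall>i < length ps. deriv e T (\<Pi>s' ! i) (V (ps ! i))"
    using Cons.prems(3) P by force
  ultimately have "deriv e T ((\<Gamma> @ \<Pi>) @ concat \<Pi>s' @ \<Delta>) C" using Cons.IH by blast
  then show ?case using P by simp
qed

lemma B_to_B': "deriv ExtB T \<Pi> A \<Longrightarrow> deriv ExtB' T \<Pi> A"
proof (induction rule: deriv.induct)
  case (brule qs r ps t \<Delta>)
  have "deriv ExtB' T (concat (map (\<lambda>p. [V p]) ps) @ \<Delta>) (V t)"
    by (rule deriv.brule'[OF _ brule(2)]) (auto intro: deriv.ax brule(4))
  moreover have "concat (map (\<lambda>p. [V p]) ps) = map V ps" by (induction ps) auto
  ultimately show ?case by simp
qed (auto intro: deriv.intros deriv.divL[simplified] deriv.cut[simplified])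

lemma B'_to_B: "deriv ExtB' T \<Pi> A \<Longrightarrow> deriv ExtB T \<Pi> A"
proof (induction rule: deriv.induct)
  case (brule' qs r ps t \<Pi>s \<Delta>)
  have "deriv ExtB T ([] @ map V ps @ \<Delta>) (V t)"
    using deriv.brule[OF _ brule'(2) brule'(6)] by simp
  moreover have "\<forall>i < length ps. deriv ExtB T (\<Pi>s ! i) (V (ps ! i))" using brule' by blast
  ultimately show ?case using multicut[OF _ brule'(3)] by fastforce
qed (auto intro: deriv.intros deriv.divL[simplified] deriv.cut[simplified])

lemma B_to_Ax: "deriv ExtB T \<Pi> A \<Longrightarrow> deriv ExtAx T \<Pi> A"
proof (induction rule: deriv.induct)
  case (brule qs r ps t \<Delta>)
  have d: "deriv ExtAx T \<Delta> (divs (V r) (map V qs))" using divs_R brule(4) by blast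
  have "deriv ExtAx T [] (b_axiom (qs, r, ps, t))" by (rule deriv.baxiom) (use brule(2) in auto)
  then have "deriv ExtAx T (map V ps) (Div (V t) (divs (V r) (map V qs)))"
    unfolding b_axiom_def using divs_inv by fastforce
  then have "deriv ExtAx T (map V ps @ [divs (V r) (map V qs)] @ []) (V t)"
    using inv_div by simp
  from cut[OF d this] show ?case by simp
qed (auto intro: deriv.intros deriv.divL[simplified] deriv.cut[simplified])

lemma Ax_to_B: "deriv ExtAx T \<Pi> A \<Longrightarrow> deriv ExtB T \<Pi> A"
proof (induction rule: deriv.induct)
  case (baxiom tp)
  obtain qs r ps t where tp: "tp = (qs, r, ps, t)" by (cases tp) auto
  have "deriv ExtB T [divs (V r) (map V qs)] (divs (V r) (map V qs))" by (rule deriv.ax)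
  then have "deriv ExtB T ([divs (V r) (map V qs)] @ map V qs) (V r)" by (rule divs_inv)
  from deriv.brule[OF _ _ this, where ps=ps and t=t] baxiom(2) tp
  have "deriv ExtB T (map V ps @ [divs (V r) (map V qs)]) (V t)" by simp
  then have "deriv ExtB T (map V ps) (Div (V t) (divs (V r) (map V qs)))" by (rule divR)
  then have "deriv ExtB T ([] @ map V ps) (Div (V t) (divs (V r) (map V qs)))" by simp
  from divs_R[OF this] show ?case by (simp add: b_axiom_def tp)
qed (auto intro: deriv.intros deriv.divL[simplified] deriv.cut[simplified])

theorem lemma3:
  fixes T :: "'a tup set"
  assumes "finite T"
  shows "(\<forall>\<Pi> A. deriv ExtB T \<Pi> A \<longleftrightarrow> deriv ExtB' T \<Pi> A)
       \<and> (\<forall>\<Pi> A. deriv ExtB T \<Pi> A \<longleftrightarrow> deriv ExtAx T \<Pi> A)"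
  using B_to_B' B'_to_B B_to_Ax Ax_to_B by blast

end
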